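(* Let $A,B,C,D$ be real random variables on a common probability space with finite second moments, $\mathbb{E}[A]\neq0$, $\mathbb{E}[C]\neq 0$, and set $R=\mathbb{E}[A]/\mathbb{E}[C]$. Let $n,m\ge1$, let $(A_i,B_i,C_i,D_i)_{i=1,\dots,n}$ be i.i.d. copies of $(A,B,C,D)$, and let $(B_i,D_i)_{i=n+1,\dots,n+m}$ be i.i.d. copies of $(B,D)$, independent of the first $n$ samples. For $\alpha,\beta\in\mathbb{R}$ define the exact and approximate control-variate numerators and denominators $$N_\alpha=\overline{A_n}+\alpha(\mathbb{E}[B]-\overline{B_n}),\quad M_\beta=\overline{C_n}+\beta(\mathbb{E}[D]-\overline{D_n}),$$ $$\tilde N_\alpha=\overline{A_n}+\alpha(\overline{B_{n+m}}-\overline{B_n}),\quad \tilde M_\beta=\overline{C_n}+\beta(\overline{D_{n+m}}-\overline{D_n}).$$ Then for all $\alpha,\beta\in\mathbb{R}$, $$\Phi(\tilde N_\alpha,\tilde M_\beta)-\Phi(\overline{A_n},\overline{C_n})=\frac{m}{n+m}\Big(\Phi(N_\alpha,M_\beta)-\Phi(\overline{A_n},\overline{C_n})\Big),$$ $$\Phi(\tilde N_\alpha,\overline{C_n})-\Phi(\overline{A_n},\overline{C_n})=\frac{m}{n+m}\Big(\Phi(N_\alpha,\overline{C_n})-\Phi(\overline{A_n},\overline{C_n})\Big).$$ Consequently the minimizers over $(\alpha,\beta)$ (resp. over $\alpha$) of the approximate-control-variate quantities coincide with those of the exact-control-variate quantities.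
   Context: For random variables $X$ with samples $X_1,X_2,\dots$, $\overline{X_k}=\frac1k\sum_{i=1}^k X_i$. For real random variables $X,Z$ with finite second moments and $\mathbb{E}[Z]\neq0$, define the first-order (delta-method) approximation of the variance of the ratio $X/Z$: $$\Phi(X,Z)=\frac{\mathrm{Var}(X)}{\mathbb{E}[Z]^2}+\frac{\mathbb{E}[X]^2}{\mathbb{E}[Z]^4}\mathrm{Var}(Z)-2\frac{\mathbb{E}[X]}{\mathbb{E}[Z]^3}\mathrm{Cov}(X,Z).$$ The paper uses $\Phi$ of numerator and denominator estimators as the variance of the corresponding ratio estimator of $R$: $\overline{A_n}/\overline{C_n}$ (MC/MC), $N_\alpha/M_\beta$ (CV/CV, with known $\mathbb{E}[B],\mathbb{E}[D]$), $N_\alpha/\overline{C_n}$ (CV/MC), and their approximate-control-variate analogues $\tilde N_\alpha/\tilde M_\beta$ (ACV/ACV) and $\tilde N_\alpha/\overline{C_n}$ (ACV/MC), in which the unknown control-variate means are replaced by sample means over $n+m$ samples. *)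

theory Defs
  imports "HOL-Probability.Probability"
begin

definition smean :: "(nat \<Rightarrow> 'a \<Rightarrow> real) \<Rightarrow> nat \<Rightarrow> 'a \<Rightarrow> real" where
  "smean X k = (\<lambda>\<omega>. (\<Sum>i<k. X i \<omega>) / real k)"

definition Ex :: "'a measure \<Rightarrow> ('a \<Rightarrow> real) \<Rightarrow> real" where
  "Ex M X = integral\<^sup>L M X"

definition Var :: "'a measure \<Rightarrow> ('a \<Rightarrow> real) \<Rightarrow> real" where
  "Var M X = integral\<^sup>L M (\<lambda>\<omega>. (X \<omega> - Ex M X)\<^sup>2)"

definition Cov :: "'a measure \<Rightarrow> ('a \<Rightarrow> real) \<Rightarrow> ('a \<Rightarrow> real) \<Rightarrow> real" where
  "Cov M X Z = integral\<^sup>L M (\<lambda>\<omega>. (X \<omega> - Ex M X) * (Z \<omega> - Ex M Z))"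

text \<open>First-order (delta-method) approximation of the variance of the ratio X/Z.\<close>
definition Phi :: "'a measure \<Rightarrow> ('a \<Rightarrow> real) \<Rightarrow> ('a \<Rightarrow> real) \<Rightarrow> real" where
  "Phi M X Z = Var M X / (Ex M Z)^2 + (Ex M X)^2 / (Ex M Z)^4 * Var M Z
              - 2 * Ex M X / (Ex M Z)^3 * Cov M X Z"

end

theory Submission
  imports Defs
begin

definition sqint :: "'a measure \<Rightarrow> ('a \<Rightarrow> real) \<Rightarrow> bool" where
  "sqint M f \<longleftrightarrow> f \<in> borel_measurable M \<and> integrable M (\<lambda>\<omega>. (f \<omega>)\<^sup>2)"

lemma abs_le_1sq: "\<bar>x::real\<bar> \<le> \<bar>1 + x\<^sup>2\<bar>"
proof -
  have "0 \<le> (\<bar>x\<bar> - 1)\<^sup>2" by simp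
  moreover have "(\<bar>x\<bar> - 1)\<^sup>2 = x\<^sup>2 - 2*\<bar>x\<bar> + 1" by (simp add: power2_eq_square algebra_simps)
  moreover have "\<bar>1 + x\<^sup>2\<bar> = 1 + x\<^sup>2" by simp
  ultimately show ?thesis using abs_ge_zero[of x] by linarith
qed

lemma abs_mult_le_sq: "\<bar>(x::real) * y\<bar> \<le> \<bar>x\<^sup>2 + y\<^sup>2\<bar>"
proof -
  have "0 \<le> (\<bar>x\<bar> - \<bar>y\<bar>)\<^sup>2" by simp
  moreover have "(\<bar>x\<bar> - \<bar>y\<bar>)\<^sup>2 = x\<^sup>2 - 2*\<bar>x*y\<bar> + y\<^sup>2" by (simp add: power2_eq_square algebra_simps abs_mult)
  moreover have "\<bar>x\<^sup>2 + y\<^sup>2\<bar> = x\<^sup>2 + y\<^sup>2" by simp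
  ultimately show ?thesis using abs_ge_zero[of "x*y"] by linarith
qed

lemma phi_alg:
  fixes vt v0 ve wt w0 we ct c0 ce a b d r :: real
  assumes "vt - v0 = r*(ve - v0)" "wt - w0 = r*(we - w0)" "ct - c0 = r*(ce - c0)"
  shows "(vt/a + b*wt - d*ct) - (v0/a + b*w0 - d*c0) = r*((ve/a + b*we - d*ce) - (v0/a + b*w0 - d*c0))"
proof -
  have "(vt/a + b*wt - d*ct) - (v0/a + b*w0 - d*c0) = (vt - v0)/a + b*(wt - w0) - d*(ct - c0)"
    by (simp add: diff_divide_distrib algebra_simps)
  also have "\<dots> = r*(ve - v0)/a + b*(r*(we - w0)) - d*(r*(ce - c0))" using assms by simp
  also have "\<dots> = r*((ve/a + b*we - d*ce) - (v0/a + b*w0 - d*c0))"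
    by (simp add: diff_divide_distrib algebra_simps)
  finally show ?thesis .
qed
lemma le_iff_scaled:
  fixes a a' b b' c r :: real
  assumes "r > 0" "a - c = r*(b - c)" "a' - c = r*(b' - c)"
  shows "(a \<le> a') \<longleftrightarrow> (b \<le> b')"
proof -
  have "a \<le> a' \<longleftrightarrow> r*(b - c) \<le> r*(b' - c)" using assms(2,3) by linarith
  also have "\<dots> \<longleftrightarrow> b \<le> b'" using assms(1) by simp
  finally show ?thesis .
qed

context prob_space
begin

lemma sqint_integrable:
  assumes "sqint M f" shows "integrable M f"
proof (rule Bochner_Integration.integrable_bound)
  show "integrable M (\<lambda>\<omega>. 1 + (f \<omega>)\<^sup>2)" using assms unfolding sqint_def by auto
  show "f \<in> borel_measurable M" using assms unfolding sqint_def by auto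
  show "AE x in M. norm (f x) \<le> norm (1 + (f x)\<^sup>2)" using abs_le_1sq by simp
qed

lemma sqint_prod:
  assumes "sqint M f" "sqint M g" shows "integrable M (\<lambda>\<omega>. f \<omega> * g \<omega>)"
proof (rule Bochner_Integration.integrable_bound)
  show "integrable M (\<lambda>\<omega>. (f \<omega>)\<^sup>2 + (g \<omega>)\<^sup>2)" using assms unfolding sqint_def by auto
  show "(\<lambda>\<omega>. f \<omega> * g \<omega>) \<in> borel_measurable M" using assms unfolding sqint_def by auto
  show "AE x in M. norm (f x * g x) \<le> norm ((f x)\<^sup>2 + (g x)\<^sup>2)" using abs_mult_le_sq by simp
qed

lemma sqint_add:
  assumes "sqint M f" "sqint M g" shows "sqint M (\<lambda>\<omega>. f \<omega> + g \<omega>)"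
proof -
  have "integrable M (\<lambda>\<omega>. (f \<omega>)\<^sup>2 + (g \<omega>)\<^sup>2 + 2 * (f \<omega> * g \<omega>))"
    using assms sqint_prod unfolding sqint_def by auto
  moreover have "(\<lambda>\<omega>. (f \<omega> + g \<omega>)\<^sup>2) = (\<lambda>\<omega>. (f \<omega>)\<^sup>2 + (g \<omega>)\<^sup>2 + 2 * (f \<omega> * g \<omega>))"
    by (simp add: power2_eq_square algebra_simps)
  ultimately show ?thesis using assms unfolding sqint_def by auto
qed

lemma sqint_cmult:
  assumes "sqint M f" shows "sqint M (\<lambda>\<omega>. c * f \<omega>)"
proof -
  have "integrable M (\<lambda>\<omega>. c\<^sup>2 * (f \<omega>)\<^sup>2)" using assms unfolding sqint_def by auto
  moreover have "(\<lambda>\<omega>. c * f \<omega>) \<in> borel_measurable M" using assms unfolding sqint_def by auto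
  ultimately show ?thesis unfolding sqint_def by (simp add: power_mult_distrib)
qed

lemma sqint_const: "sqint M (\<lambda>\<omega>. c)"
  unfolding sqint_def by simp

lemma sqint_sum:
  assumes "finite I" "\<And>i. i \<in> I \<Longrightarrow> sqint M (f i)" shows "sqint M (\<lambda>\<omega>. \<Sum>i\<in>I. f i \<omega>)"
  using assms
proof (induction I rule: finite_induct)
  case empty then show ?case using sqint_const[of 0] by simp
next
  case (insert x F)
  then show ?case using sqint_add[of "f x" "\<lambda>\<omega>. \<Sum>i\<in>F. f i \<omega>"] by (simp add: fun_eq_iff)
qed

lemma Cov_eq:
  assumes "sqint M f" "sqint M g"
  shows "Cov M f g = Ex M (\<lambda>\<omega>. f \<omega> * g \<omega>) - Ex M f * Ex M g"
proof -
  have i: "integrable M f" "integrable M g" "integrable M (\<lambda>\<omega>. f \<omega> * g \<omega>)"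
    using assms sqint_integrable sqint_prod by auto
  have "(\<lambda>\<omega>. (f \<omega> - Ex M f) * (g \<omega> - Ex M g)) =
     (\<lambda>\<omega>. f \<omega> * g \<omega> - Ex M g * f \<omega> - Ex M f * g \<omega> + Ex M f * Ex M g)"
    by (simp add: fun_eq_iff algebra_simps)
  then have "Cov M f g = Ex M (\<lambda>\<omega>. f \<omega> * g \<omega>) - Ex M g * Ex M f - Ex M f * Ex M g + Ex M f * Ex M g"
    unfolding Cov_def using i by (simp add: Ex_def prob_space)
  then show ?thesis by simp
qed


lemma Ex_const: "Ex M (\<lambda>\<omega>. c) = c"
  unfolding Ex_def by (simp add: prob_space)

lemma Ex_cmult: "Ex M (\<lambda>\<omega>. c * f \<omega>) = c * Ex M f"
  unfolding Ex_def by simp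

lemma Ex_add: "integrable M f \<Longrightarrow> integrable M g \<Longrightarrow> Ex M (\<lambda>\<omega>. f \<omega> + g \<omega>) = Ex M f + Ex M g"
  unfolding Ex_def by simp

lemma Ex_sum: "finite I \<Longrightarrow> (\<And>i. i \<in> I \<Longrightarrow> integrable M (f i)) \<Longrightarrow> Ex M (\<lambda>\<omega>. \<Sum>i\<in>I. f i \<omega>) = (\<Sum>i\<in>I. Ex M (f i))"
  unfolding Ex_def by simp

lemma Cov_sym: "Cov M f g = Cov M g f"
  unfolding Cov_def by (simp add: mult.commute)

lemma Cov_cmult_left: "Cov M (\<lambda>\<omega>. c * f \<omega>) g = c * Cov M f g"
proof -
  have "(\<lambda>\<omega>. (c * f \<omega> - Ex M (\<lambda>\<omega>. c * f \<omega>)) * (g \<omega> - Ex M g)) = (\<lambda>\<omega>. c * ((f \<omega> - Ex M f) * (g \<omega> - Ex M g)))"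
    by (simp add: Ex_cmult fun_eq_iff algebra_simps)
  then show ?thesis unfolding Cov_def by simp
qed

lemma Cov_const_left: "integrable M f \<Longrightarrow> Cov M (\<lambda>\<omega>. c + f \<omega>) g = Cov M f g"
  unfolding Cov_def by (simp add: Ex_add Ex_const)

lemma Cov_const_only: "Cov M (\<lambda>\<omega>. c) g = 0"
  unfolding Cov_def by (simp add: Ex_const)

lemma Cov_add_left:
  assumes "sqint M f" "sqint M g" "sqint M h"
  shows "Cov M (\<lambda>\<omega>. f \<omega> + g \<omega>) h = Cov M f h + Cov M g h"
proof -
  have "integrable M f" "integrable M g" "integrable M (\<lambda>\<omega>. f \<omega> * h \<omega>)" "integrable M (\<lambda>\<omega>. g \<omega> * h \<omega>)"
    using assms sqint_integrable sqint_prod by auto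
  moreover have "(\<lambda>\<omega>. (f \<omega> + g \<omega>) * h \<omega>) = (\<lambda>\<omega>. f \<omega> * h \<omega> + g \<omega> * h \<omega>)"
    by (simp add: fun_eq_iff algebra_simps)
  ultimately show ?thesis
    using assms sqint_add[OF assms(1,2)]
    by (simp add: Cov_eq Ex_add algebra_simps)
qed

lemma indep_pair:
  assumes "indep_vars (\<lambda>_. borel) V K" "i \<in> K" "j \<in> K" "i \<noteq> j"
    "f \<in> borel_measurable borel" "g \<in> borel_measurable borel"
  shows "indep_var borel (\<lambda>\<omega>. f (V i \<omega>)) borel (\<lambda>\<omega>. g (V j \<omega>))"
proof -
  have "indep_var (PiM {i} (\<lambda>_. borel)) (\<lambda>\<omega>. restrict (\<lambda>k. V k \<omega>) {i})
           (PiM {j} (\<lambda>_. borel)) (\<lambda>\<omega>. restrict (\<lambda>k. V k \<omega>) {j})"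
    by (rule indep_var_restrict[OF assms(1)]) (use assms in auto)
  moreover have "(\<lambda>x. f (x i)) \<in> measurable (PiM {i} (\<lambda>_. borel)) borel"
    by (intro measurable_compose[OF _ assms(5)] measurable_component_singleton) simp
  moreover have "(\<lambda>x. g (x j)) \<in> measurable (PiM {j} (\<lambda>_. borel)) borel"
    by (intro measurable_compose[OF _ assms(6)] measurable_component_singleton) simp
  ultimately have "indep_var borel ((\<lambda>x. f (x i)) \<circ> (\<lambda>\<omega>. restrict (\<lambda>k. V k \<omega>) {i}))
        borel ((\<lambda>x. g (x j)) \<circ> (\<lambda>\<omega>. restrict (\<lambda>k. V k \<omega>) {j}))"
    by (rule indep_var_compose)
  then show ?thesis by (simp add: comp_def)
qed

lemma cov_sum_indep:
  assumes fin: "finite K" and ind: "indep_vars (\<lambda>_. borel) V K" and IJ: "I \<subseteq> K" "J \<subseteq> K"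
    and fg: "f \<in> borel_measurable borel" "g \<in> borel_measurable borel"
    and sf: "\<And>i. i \<in> K \<Longrightarrow> sqint M (\<lambda>\<omega>. f (V i \<omega>))"
    and sg: "\<And>i. i \<in> K \<Longrightarrow> sqint M (\<lambda>\<omega>. g (V i \<omega>))"
  shows "Cov M (\<lambda>\<omega>. \<Sum>i\<in>I. f (V i \<omega>)) (\<lambda>\<omega>. \<Sum>j\<in>J. g (V j \<omega>))
       = (\<Sum>i\<in>I \<inter> J. Cov M (\<lambda>\<omega>. f (V i \<omega>)) (\<lambda>\<omega>. g (V i \<omega>)))"
proof -
  have fI: "finite I" "finite J" using fin IJ finite_subset by auto
  have sfI: "\<And>i. i \<in> I \<Longrightarrow> sqint M (\<lambda>\<omega>. f (V i \<omega>))" using sf IJ by auto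
  have sgJ: "\<And>i. i \<in> J \<Longrightarrow> sqint M (\<lambda>\<omega>. g (V i \<omega>))" using sg IJ by auto
  have trm: "Ex M (\<lambda>\<omega>. f (V i \<omega>) * g (V j \<omega>)) - Ex M (\<lambda>\<omega>. f (V i \<omega>)) * Ex M (\<lambda>\<omega>. g (V j \<omega>))
      = (if i = j then Cov M (\<lambda>\<omega>. f (V i \<omega>)) (\<lambda>\<omega>. g (V i \<omega>)) else 0)" if ij: "i \<in> I" "j \<in> J" for i j
  proof (cases "i = j")
    case True then show ?thesis using Cov_eq sfI sgJ ij by simp
  next
    case False
    have "indep_var borel (\<lambda>\<omega>. f (V i \<omega>)) borel (\<lambda>\<omega>. g (V j \<omega>))"
      using indep_pair[OF ind _ _ False fg] ij IJ by auto
    then have "Ex M (\<lambda>\<omega>. f (V i \<omega>) * g (V j \<omega>)) = Ex M (\<lambda>\<omega>. f (V i \<omega>)) * Ex M (\<lambda>\<omega>. g (V j \<omega>))"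
      unfolding Ex_def
      by (rule indep_var_lebesgue_integral) (use sfI sgJ ij sqint_integrable in auto)
    then show ?thesis using False by simp
  qed
  have s1: "sqint M (\<lambda>\<omega>. \<Sum>i\<in>I. f (V i \<omega>))" by (rule sqint_sum[OF fI(1)]) (use sfI in auto)
  have s2: "sqint M (\<lambda>\<omega>. \<Sum>j\<in>J. g (V j \<omega>))" by (rule sqint_sum[OF fI(2)]) (use sgJ in auto)
  have "Ex M (\<lambda>\<omega>. (\<Sum>i\<in>I. f (V i \<omega>)) * (\<Sum>j\<in>J. g (V j \<omega>)))
      = Ex M (\<lambda>\<omega>. \<Sum>i\<in>I. \<Sum>j\<in>J. f (V i \<omega>) * g (V j \<omega>))"
    by (simp add: sum_product)
  also have "\<dots> = (\<Sum>i\<in>I. \<Sum>j\<in>J. Ex M (\<lambda>\<omega>. f (V i \<omega>) * g (V j \<omega>)))"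
    using fI sfI sgJ
    by (simp add: Ex_sum sqint_prod integrable_sum)
  finally have e1: "Ex M (\<lambda>\<omega>. (\<Sum>i\<in>I. f (V i \<omega>)) * (\<Sum>j\<in>J. g (V j \<omega>))) = \<dots>" .
  have e2: "Ex M (\<lambda>\<omega>. \<Sum>i\<in>I. f (V i \<omega>)) * Ex M (\<lambda>\<omega>. \<Sum>j\<in>J. g (V j \<omega>))
     = (\<Sum>i\<in>I. \<Sum>j\<in>J. Ex M (\<lambda>\<omega>. f (V i \<omega>)) * Ex M (\<lambda>\<omega>. g (V j \<omega>)))"
    using fI sfI sgJ sqint_integrable by (simp add: Ex_sum sum_product)
  have "Cov M (\<lambda>\<omega>. \<Sum>i\<in>I. f (V i \<omega>)) (\<lambda>\<omega>. \<Sum>j\<in>J. g (V j \<omega>))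
     = (\<Sum>i\<in>I. \<Sum>j\<in>J. Ex M (\<lambda>\<omega>. f (V i \<omega>) * g (V j \<omega>)) - Ex M (\<lambda>\<omega>. f (V i \<omega>)) * Ex M (\<lambda>\<omega>. g (V j \<omega>)))"
    using Cov_eq[OF s1 s2] e1 e2 by (simp add: sum_subtractf)
  also have "\<dots> = (\<Sum>i\<in>I. \<Sum>j\<in>J. (if i = j then Cov M (\<lambda>\<omega>. f (V i \<omega>)) (\<lambda>\<omega>. g (V i \<omega>)) else 0))"
    using trm by simp
  also have "\<dots> = (\<Sum>i\<in>I. if i \<in> J then Cov M (\<lambda>\<omega>. f (V i \<omega>)) (\<lambda>\<omega>. g (V i \<omega>)) else 0)"
    using fI by (simp add: sum.delta)
  also have "\<dots> = (\<Sum>i\<in>I \<inter> J. Cov M (\<lambda>\<omega>. f (V i \<omega>)) (\<lambda>\<omega>. g (V i \<omega>)))"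
    using fI by (simp add: sum.inter_restrict)
  finally show ?thesis .
qed


lemma transfer_Ex:
  fixes h :: "'b::topological_space \<Rightarrow> real"
  assumes Y: "Y \<in> measurable M borel" and Z: "Z \<in> measurable M borel"
    and d: "distr M borel Y = distr M borel Z" and h: "h \<in> borel_measurable borel"
  shows "Ex M (\<lambda>\<omega>. h (Y \<omega>)) = Ex M (\<lambda>\<omega>. h (Z \<omega>))"
  unfolding Ex_def using integral_distr[OF Y h] integral_distr[OF Z h] d by simp

lemma transfer_int:
  fixes h :: "'b::topological_space \<Rightarrow> real"
  assumes Y: "Y \<in> measurable M borel" and Z: "Z \<in> measurable M borel"
    and d: "distr M borel Y = distr M borel Z" and h: "h \<in> borel_measurable borel"
  shows "integrable M (\<lambda>\<omega>. h (Y \<omega>)) = integrable M (\<lambda>\<omega>. h (Z \<omega>))"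
  using integrable_distr_eq[OF Y h] integrable_distr_eq[OF Z h] d by simp

lemma transfer_sqint:
  fixes f :: "'b::topological_space \<Rightarrow> real"
  assumes Y: "Y \<in> measurable M borel" and Z: "Z \<in> measurable M borel"
    and d: "distr M borel Y = distr M borel Z" and f: "f \<in> borel_measurable borel"
    and s: "sqint M (\<lambda>\<omega>. f (Z \<omega>))"
  shows "sqint M (\<lambda>\<omega>. f (Y \<omega>))"
proof -
  have "(\<lambda>x. (f x)\<^sup>2) \<in> borel_measurable borel" using f by measurable
  then have "integrable M (\<lambda>\<omega>. (f (Y \<omega>))\<^sup>2) = integrable M (\<lambda>\<omega>. (f (Z \<omega>))\<^sup>2)"
    by (rule transfer_int[OF Y Z d])
  moreover have "(\<lambda>\<omega>. f (Y \<omega>)) \<in> borel_measurable M" using f Y by measurable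
  ultimately show ?thesis using s unfolding sqint_def by simp
qed

lemma transfer_Cov:
  fixes f g :: "'b::topological_space \<Rightarrow> real"
  assumes Y: "Y \<in> measurable M borel" and Z: "Z \<in> measurable M borel"
    and d: "distr M borel Y = distr M borel Z" and f: "f \<in> borel_measurable borel"
    and g: "g \<in> borel_measurable borel"
  shows "Cov M (\<lambda>\<omega>. f (Y \<omega>)) (\<lambda>\<omega>. g (Y \<omega>)) = Cov M (\<lambda>\<omega>. f (Z \<omega>)) (\<lambda>\<omega>. g (Z \<omega>))"
proof -
  have e1: "Ex M (\<lambda>\<omega>. f (Y \<omega>)) = Ex M (\<lambda>\<omega>. f (Z \<omega>))" by (rule transfer_Ex[OF Y Z d f])
  have e2: "Ex M (\<lambda>\<omega>. g (Y \<omega>)) = Ex M (\<lambda>\<omega>. g (Z \<omega>))" by (rule transfer_Ex[OF Y Z d g])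
  have "(\<lambda>x. (f x - Ex M (\<lambda>\<omega>. f (Z \<omega>))) * (g x - Ex M (\<lambda>\<omega>. g (Z \<omega>)))) \<in> borel_measurable borel"
    using f g by measurable
  from transfer_Ex[OF Y Z d this] show ?thesis unfolding Cov_def e1 e2 by (simp add: Ex_def)
qed

lemma cov_lin3_left:
  assumes "sqint M P1" "sqint M P2" "sqint M P3" and Q: "sqint M Q"
  shows "Cov M (\<lambda>\<omega>. x0 + x1 * P1 \<omega> + x2 * P2 \<omega> + x3 * P3 \<omega>) Q
     = x1 * Cov M P1 Q + x2 * Cov M P2 Q + x3 * Cov M P3 Q"
proof -
  have s1: "sqint M (\<lambda>\<omega>. x1 * P1 \<omega>)" "sqint M (\<lambda>\<omega>. x2 * P2 \<omega>)" "sqint M (\<lambda>\<omega>. x3 * P3 \<omega>)"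
    using assms sqint_cmult by auto
  have s2: "sqint M (\<lambda>\<omega>. x1 * P1 \<omega> + x2 * P2 \<omega>)" using s1 sqint_add by auto
  have eq: "(\<lambda>\<omega>. x0 + x1 * P1 \<omega> + x2 * P2 \<omega> + x3 * P3 \<omega>) = (\<lambda>\<omega>. x0 + ((x1 * P1 \<omega> + x2 * P2 \<omega>) + x3 * P3 \<omega>))"
    by (simp add: fun_eq_iff algebra_simps)
  have "Cov M (\<lambda>\<omega>. x0 + x1 * P1 \<omega> + x2 * P2 \<omega> + x3 * P3 \<omega>) Q = Cov M (\<lambda>\<omega>. x0 + ((x1 * P1 \<omega> + x2 * P2 \<omega>) + x3 * P3 \<omega>)) Q"
    by (simp only: eq)
  also have "\<dots> = Cov M (\<lambda>\<omega>. (x1 * P1 \<omega> + x2 * P2 \<omega>) + x3 * P3 \<omega>) Q"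
    by (rule Cov_const_left) (use s1 s2 sqint_add sqint_integrable in auto)
  also have "\<dots> = Cov M (\<lambda>\<omega>. x1 * P1 \<omega> + x2 * P2 \<omega>) Q + Cov M (\<lambda>\<omega>. x3 * P3 \<omega>) Q"
    by (rule Cov_add_left[OF s2 s1(3) Q])
  also have "Cov M (\<lambda>\<omega>. x1 * P1 \<omega> + x2 * P2 \<omega>) Q = Cov M (\<lambda>\<omega>. x1 * P1 \<omega>) Q + Cov M (\<lambda>\<omega>. x2 * P2 \<omega>) Q"
    by (rule Cov_add_left[OF s1(1,2) Q])
  finally show ?thesis by (simp add: Cov_cmult_left)
qed

lemma sqint_lin3:
  assumes "sqint M P1" "sqint M P2" "sqint M P3"
  shows "sqint M (\<lambda>\<omega>. x0 + x1 * P1 \<omega> + x2 * P2 \<omega> + x3 * P3 \<omega>)"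
  using assms by (intro sqint_add sqint_cmult sqint_const)

lemma cov_lin3:
  assumes P: "sqint M P1" "sqint M P2" "sqint M P3" and Q: "sqint M Q1" "sqint M Q2" "sqint M Q3"
  shows "Cov M (\<lambda>\<omega>. x0 + x1 * P1 \<omega> + x2 * P2 \<omega> + x3 * P3 \<omega>) (\<lambda>\<omega>. z0 + z1 * Q1 \<omega> + z2 * Q2 \<omega> + z3 * Q3 \<omega>)
    = x1 * z1 * Cov M P1 Q1 + x1 * z2 * Cov M P1 Q2 + x1 * z3 * Cov M P1 Q3
    + x2 * z1 * Cov M P2 Q1 + x2 * z2 * Cov M P2 Q2 + x2 * z3 * Cov M P2 Q3
    + x3 * z1 * Cov M P3 Q1 + x3 * z2 * Cov M P3 Q2 + x3 * z3 * Cov M P3 Q3"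
proof -
  have "Cov M (\<lambda>\<omega>. x0 + x1 * P1 \<omega> + x2 * P2 \<omega> + x3 * P3 \<omega>) (\<lambda>\<omega>. z0 + z1 * Q1 \<omega> + z2 * Q2 \<omega> + z3 * Q3 \<omega>)
    = x1 * Cov M P1 (\<lambda>\<omega>. z0 + z1 * Q1 \<omega> + z2 * Q2 \<omega> + z3 * Q3 \<omega>)
    + x2 * Cov M P2 (\<lambda>\<omega>. z0 + z1 * Q1 \<omega> + z2 * Q2 \<omega> + z3 * Q3 \<omega>)
    + x3 * Cov M P3 (\<lambda>\<omega>. z0 + z1 * Q1 \<omega> + z2 * Q2 \<omega> + z3 * Q3 \<omega>)"
    by (rule cov_lin3_left[OF P sqint_lin3[OF Q]])
  also have "\<dots> = x1 * (z1 * Cov M P1 Q1 + z2 * Cov M P1 Q2 + z3 * Cov M P1 Q3)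
    + x2 * (z1 * Cov M P2 Q1 + z2 * Cov M P2 Q2 + z3 * Cov M P2 Q3)
    + x3 * (z1 * Cov M P3 Q1 + z2 * Cov M P3 Q2 + z3 * Cov M P3 Q3)"
    using cov_lin3_left[OF Q P(1)] cov_lin3_left[OF Q P(2)] cov_lin3_left[OF Q P(3)]
    by (simp add: Cov_sym[of _ "\<lambda>\<omega>. z0 + z1 * Q1 \<omega> + z2 * Q2 \<omega> + z3 * Q3 \<omega>"] Cov_sym[of Q1] Cov_sym[of Q2] Cov_sym[of Q3])
  finally show ?thesis by (simp add: algebra_simps)
qed

lemma ex_lin3:
  assumes "integrable M P1" "integrable M P2" "integrable M P3"
  shows "Ex M (\<lambda>\<omega>. x0 + x1 * P1 \<omega> + x2 * P2 \<omega> + x3 * P3 \<omega>) = x0 + x1 * Ex M P1 + x2 * Ex M P2 + x3 * Ex M P3"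
  using assms unfolding Ex_def by (simp add: prob_space)

end

lemma tuple_meas: "(\<lambda>\<omega>. (f \<omega>::real, g \<omega>::real, h \<omega>::real, k \<omega>::real)) \<in> borel_measurable M"
  if "f \<in> borel_measurable M" "g \<in> borel_measurable M" "h \<in> borel_measurable M" "k \<in> borel_measurable M"
  using that by measurable


theorem mainTheorem7:
  fixes M :: "'a measure"
    and A B C D :: "'a \<Rightarrow> real"
    and As Bs Cs Ds :: "nat \<Rightarrow> 'a \<Rightarrow> real"
    and n m :: nat
  assumes P: "prob_space M"
    and meas: "A \<in> borel_measurable M" "B \<in> borel_measurable M"
              "C \<in> borel_measurable M" "D \<in> borel_measurable M"
    and sq: "integrable M (\<lambda>\<omega>. (A \<omega>)\<^sup>2)" "integrable M (\<lambda>\<omega>. (B \<omega>)\<^sup>2)"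
            "integrable M (\<lambda>\<omega>. (C \<omega>)\<^sup>2)" "integrable M (\<lambda>\<omega>. (D \<omega>)\<^sup>2)"
    and EA: "Ex M A \<noteq> 0" and EC: "Ex M C \<noteq> 0"
    and n: "n \<ge> 1" and m: "m \<ge> 1"
    and measS: "\<And>i. i < n \<Longrightarrow> As i \<in> borel_measurable M"
               "\<And>i. i < n \<Longrightarrow> Cs i \<in> borel_measurable M"
               "\<And>i. i < n + m \<Longrightarrow> Bs i \<in> borel_measurable M"
               "\<And>i. i < n + m \<Longrightarrow> Ds i \<in> borel_measurable M"
    and indep: "prob_space.indep_vars M (\<lambda>_. borel)
        (\<lambda>i \<omega>. if i < n then (As i \<omega>, Bs i \<omega>, Cs i \<omega>, Ds i \<omega>)
                 else ((0::real), Bs i \<omega>, (0::real), Ds i \<omega>)) {..<n + m}"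
    and dist1: "\<And>i. i < n \<Longrightarrow>
        distr M borel (\<lambda>\<omega>. (As i \<omega>, Bs i \<omega>, Cs i \<omega>, Ds i \<omega>))
        = distr M borel (\<lambda>\<omega>. (A \<omega>, B \<omega>, C \<omega>, D \<omega>))"
    and dist2: "\<And>i. n \<le> i \<Longrightarrow> i < n + m \<Longrightarrow>
        distr M borel (\<lambda>\<omega>. (Bs i \<omega>, Ds i \<omega>)) = distr M borel (\<lambda>\<omega>. (B \<omega>, D \<omega>))"
  defines "N \<equiv> \<lambda>\<alpha> \<omega>. smean As n \<omega> + \<alpha> * (Ex M B - smean Bs n \<omega>)"
    and "Mb \<equiv> \<lambda>\<beta> \<omega>. smean Cs n \<omega> + \<beta> * (Ex M D - smean Ds n \<omega>)"
    and "Nt \<equiv> \<lambda>\<alpha> \<omega>. smean As n \<omega> + \<alpha> * (smean Bs (n + m) \<omega> - smean Bs n \<omega>)"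
    and "Mt \<equiv> \<lambda>\<beta> \<omega>. smean Cs n \<omega> + \<beta> * (smean Ds (n + m) \<omega> - smean Ds n \<omega>)"
  shows "(\<forall>\<alpha> \<beta>::real.
            Phi M (Nt \<alpha>) (Mt \<beta>) - Phi M (smean As n) (smean Cs n)
              = real m / real (n + m) * (Phi M (N \<alpha>) (Mb \<beta>) - Phi M (smean As n) (smean Cs n)))
       \<and> (\<forall>\<alpha>::real.
            Phi M (Nt \<alpha>) (smean Cs n) - Phi M (smean As n) (smean Cs n)
              = real m / real (n + m) * (Phi M (N \<alpha>) (smean Cs n) - Phi M (smean As n) (smean Cs n)))
       \<and> (\<forall>\<alpha> \<beta>::real.
            (\<forall>\<alpha>' \<beta>'. Phi M (Nt \<alpha>) (Mt \<beta>) \<le> Phi M (Nt \<alpha>') (Mt \<beta>'))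
            \<longleftrightarrow> (\<forall>\<alpha>' \<beta>'. Phi M (N \<alpha>) (Mb \<beta>) \<le> Phi M (N \<alpha>') (Mb \<beta>')))
       \<and> (\<forall>\<alpha>::real.
            (\<forall>\<alpha>'. Phi M (Nt \<alpha>) (smean Cs n) \<le> Phi M (Nt \<alpha>') (smean Cs n))
            \<longleftrightarrow> (\<forall>\<alpha>'. Phi M (N \<alpha>) (smean Cs n) \<le> Phi M (N \<alpha>') (smean Cs n)))"
proof -
  interpret prob_space M by (rule P)
  define V where "V = (\<lambda>i \<omega>. if i < n then (As i \<omega>, Bs i \<omega>, Cs i \<omega>, Ds i \<omega>)
                 else ((0::real), Bs i \<omega>, (0::real), Ds i \<omega>))"
  have indV: "indep_vars (\<lambda>_. borel) V {..<n + m}" using indep unfolding V_def .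
  define W where "W = (\<lambda>\<omega>. (A \<omega>, B \<omega>, C \<omega>, D \<omega>))"
  define W2 where "W2 = (\<lambda>\<omega>. ((0::real), B \<omega>, (0::real), D \<omega>))"
  define p1 :: "real \<times> real \<times> real \<times> real \<Rightarrow> real" where "p1 = (\<lambda>x. fst x)"
  define p2 :: "real \<times> real \<times> real \<times> real \<Rightarrow> real" where "p2 = (\<lambda>x. fst (snd x))"
  define p3 :: "real \<times> real \<times> real \<times> real \<Rightarrow> real" where "p3 = (\<lambda>x. fst (snd (snd x)))"
  define p4 :: "real \<times> real \<times> real \<times> real \<Rightarrow> real" where "p4 = (\<lambda>x. snd (snd (snd x)))"
  define PP where "PP = {p1, p2, p3, p4}"
  have pms: "p1 \<in> borel_measurable borel" "p2 \<in> borel_measurable borel"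
    "p3 \<in> borel_measurable borel" "p4 \<in> borel_measurable borel"
    unfolding p1_def p2_def p3_def p4_def by (intro borel_measurable_continuous_onI continuous_intros)+
  have pm: "f \<in> borel_measurable borel" if "f \<in> PP" for f
    using that pms unfolding PP_def by auto
  have Wm: "W \<in> borel_measurable M" unfolding W_def by (rule tuple_meas[OF meas])
  have W2m: "W2 \<in> borel_measurable M" unfolding W2_def by (rule tuple_meas) (use meas in auto)
  have Vm: "V i \<in> borel_measurable M" if "i < n + m" for i
  proof (cases "i < n")
    case True
    then have "V i = (\<lambda>\<omega>. (As i \<omega>, Bs i \<omega>, Cs i \<omega>, Ds i \<omega>))" unfolding V_def by simp
    moreover have "i < n + m" using True by simp
    ultimately show ?thesis using tuple_meas[OF measS(1)[OF True] measS(3)[of i] measS(2)[OF True] measS(4)[of i]] by simp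
  next
    case False
    then have "V i = (\<lambda>\<omega>. ((0::real), Bs i \<omega>, (0::real), Ds i \<omega>))" unfolding V_def by simp
    then show ?thesis using tuple_meas[OF _ measS(3)[OF that] _ measS(4)[OF that], of "\<lambda>_. 0" "\<lambda>_. 0"] by simp
  qed
  have dV1: "distr M borel (V i) = distr M borel W" if "i < n" for i
  proof -
    have "V i = (\<lambda>\<omega>. (As i \<omega>, Bs i \<omega>, Cs i \<omega>, Ds i \<omega>))" unfolding V_def using that by simp
    then show ?thesis using dist1[OF that] unfolding W_def by simp
  qed
  define h :: "real \<times> real \<Rightarrow> real \<times> real \<times> real \<times> real" where "h = (\<lambda>x. (0, fst x, 0, snd x))"
  have hm: "h \<in> borel_measurable borel" unfolding h_def by (intro borel_measurable_continuous_onI continuous_intros)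
  have dV2: "distr M borel (V i) = distr M borel W2" if "n \<le> i" "i < n + m" for i
  proof -
    have Ym: "(\<lambda>\<omega>. (Bs i \<omega>, Ds i \<omega>)) \<in> borel_measurable M" using measS(3,4)[OF that(2)] by measurable
    have Y0m: "(\<lambda>\<omega>. (B \<omega>, D \<omega>)) \<in> borel_measurable M" using meas by measurable
    have "V i = h \<circ> (\<lambda>\<omega>. (Bs i \<omega>, Ds i \<omega>))" unfolding V_def h_def using that by (simp add: fun_eq_iff)
    then have "distr M borel (V i) = distr (distr M borel (\<lambda>\<omega>. (Bs i \<omega>, Ds i \<omega>))) borel h"
      using distr_distr[OF hm Ym] by simp
    also have "\<dots> = distr (distr M borel (\<lambda>\<omega>. (B \<omega>, D \<omega>))) borel h" using dist2[OF that] by simp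
    also have "\<dots> = distr M borel (h \<circ> (\<lambda>\<omega>. (B \<omega>, D \<omega>)))" using distr_distr[OF hm Y0m] by simp
    also have "h \<circ> (\<lambda>\<omega>. (B \<omega>, D \<omega>)) = W2" unfolding W2_def h_def by (simp add: fun_eq_iff)
    finally show ?thesis .
  qed
  have sA: "sqint M A" "sqint M B" "sqint M C" "sqint M D" unfolding sqint_def using meas sq by auto
  have sW: "sqint M (\<lambda>\<omega>. f (W \<omega>))" if "f \<in> PP" for f
    using that sA unfolding PP_def p1_def p2_def p3_def p4_def W_def by auto
  have sW2: "sqint M (\<lambda>\<omega>. f (W2 \<omega>))" if "f \<in> PP" for f
    using that sA sqint_const unfolding PP_def p1_def p2_def p3_def p4_def W2_def by auto
  have sV: "sqint M (\<lambda>\<omega>. f (V i \<omega>))" if "f \<in> PP" "i < n + m" for f i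
  proof (cases "i < n")
    case True
    show ?thesis by (rule transfer_sqint[OF Vm[OF that(2)] Wm dV1[OF True] pm[OF that(1)] sW[OF that(1)]])
  next
    case False
    show ?thesis using False that
      by (intro transfer_sqint[OF Vm[OF that(2)] W2m dV2 pm[OF that(1)] sW2[OF that(1)]]) auto
  qed
  define L where "L = {..<n}"
  define U where "U = {n..<n + m}"
  have LK: "L \<subseteq> {..<n + m}" and UK: "U \<subseteq> {..<n + m}" unfolding L_def U_def by auto
  have LU: "L \<inter> U = {}" "U \<inter> L = {}" unfolding L_def U_def by auto
  have cardL: "card L = n" and cardU: "card U = m" unfolding L_def U_def by auto
  have covB: "Cov M (\<lambda>\<omega>. \<Sum>i\<in>I. f (V i \<omega>)) (\<lambda>\<omega>. \<Sum>j\<in>J. g (V j \<omega>))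
       = (\<Sum>i\<in>I \<inter> J. Cov M (\<lambda>\<omega>. f (V i \<omega>)) (\<lambda>\<omega>. g (V i \<omega>)))"
    if "f \<in> PP" "g \<in> PP" "I \<subseteq> {..<n + m}" "J \<subseteq> {..<n + m}" for f g I J
    by (rule cov_sum_indep[OF _ indV that(3,4) pm[OF that(1)] pm[OF that(2)]]) (use sV that in auto)
  have covLL: "Cov M (\<lambda>\<omega>. \<Sum>i\<in>L. f (V i \<omega>)) (\<lambda>\<omega>. \<Sum>j\<in>L. g (V j \<omega>))
       = n * Cov M (\<lambda>\<omega>. f (W \<omega>)) (\<lambda>\<omega>. g (W \<omega>))" if "f \<in> PP" "g \<in> PP" for f g
  proof -
    have "Cov M (\<lambda>\<omega>. f (V i \<omega>)) (\<lambda>\<omega>. g (V i \<omega>)) = Cov M (\<lambda>\<omega>. f (W \<omega>)) (\<lambda>\<omega>. g (W \<omega>))" if "i \<in> L" for i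
      using that LK by (intro transfer_Cov Vm Wm dV1 pm \<open>f \<in> PP\<close> \<open>g \<in> PP\<close>) (auto simp: L_def)
    then show ?thesis using covB[OF that LK LK] cardL by simp
  qed
  have covUU: "Cov M (\<lambda>\<omega>. \<Sum>i\<in>U. f (V i \<omega>)) (\<lambda>\<omega>. \<Sum>j\<in>U. g (V j \<omega>))
       = m * Cov M (\<lambda>\<omega>. f (W2 \<omega>)) (\<lambda>\<omega>. g (W2 \<omega>))" if "f \<in> PP" "g \<in> PP" for f g
  proof -
    have "Cov M (\<lambda>\<omega>. f (V i \<omega>)) (\<lambda>\<omega>. g (V i \<omega>)) = Cov M (\<lambda>\<omega>. f (W2 \<omega>)) (\<lambda>\<omega>. g (W2 \<omega>))" if "i \<in> U" for i
      using that UK by (intro transfer_Cov Vm W2m dV2 pm \<open>f \<in> PP\<close> \<open>g \<in> PP\<close>) (auto simp: U_def)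
    then show ?thesis using covB[OF that UK UK] cardU by simp
  qed
  have covLU: "Cov M (\<lambda>\<omega>. \<Sum>i\<in>L. f (V i \<omega>)) (\<lambda>\<omega>. \<Sum>j\<in>U. g (V j \<omega>)) = 0"
    "Cov M (\<lambda>\<omega>. \<Sum>i\<in>U. f (V i \<omega>)) (\<lambda>\<omega>. \<Sum>j\<in>L. g (V j \<omega>)) = 0" if "f \<in> PP" "g \<in> PP" for f g
    using covB[OF that LK UK] covB[OF that UK LK] LU by auto
  have exL: "Ex M (\<lambda>\<omega>. \<Sum>i\<in>L. f (V i \<omega>)) = n * Ex M (\<lambda>\<omega>. f (W \<omega>))" if "f \<in> PP" for f
  proof -
    have "Ex M (\<lambda>\<omega>. \<Sum>i\<in>L. f (V i \<omega>)) = (\<Sum>i\<in>L. Ex M (\<lambda>\<omega>. f (V i \<omega>)))"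
      using LK by (intro Ex_sum) (auto simp: L_def intro!: sqint_integrable sV that)
    also have "\<dots> = (\<Sum>i\<in>L. Ex M (\<lambda>\<omega>. f (W \<omega>)))"
      using LK by (intro sum.cong refl transfer_Ex Vm Wm dV1 pm that) (auto simp: L_def)
    finally show ?thesis using cardL by simp
  qed
  have exU: "Ex M (\<lambda>\<omega>. \<Sum>i\<in>U. f (V i \<omega>)) = m * Ex M (\<lambda>\<omega>. f (W2 \<omega>))" if "f \<in> PP" for f
  proof -
    have "Ex M (\<lambda>\<omega>. \<Sum>i\<in>U. f (V i \<omega>)) = (\<Sum>i\<in>U. Ex M (\<lambda>\<omega>. f (V i \<omega>)))"
      using UK by (intro Ex_sum) (auto simp: U_def intro!: sqint_integrable sV that)
    also have "\<dots> = (\<Sum>i\<in>U. Ex M (\<lambda>\<omega>. f (W2 \<omega>)))"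
      using UK by (intro sum.cong refl transfer_Ex Vm W2m dV2 pm that) (auto simp: U_def)
    finally show ?thesis using cardU by simp
  qed
  have sqL: "sqint M (\<lambda>\<omega>. \<Sum>i\<in>L. f (V i \<omega>))" if "f \<in> PP" for f
    using LK by (intro sqint_sum) (auto simp: L_def intro!: sV that)
  have sqU: "sqint M (\<lambda>\<omega>. \<Sum>i\<in>U. f (V i \<omega>))" if "f \<in> PP" for f
    using UK by (intro sqint_sum) (auto simp: U_def intro!: sV that)
  have PPm: "p1 \<in> PP" "p2 \<in> PP" "p3 \<in> PP" "p4 \<in> PP" unfolding PP_def by auto
  have pW: "(\<lambda>\<omega>. p1 (W \<omega>)) = A" "(\<lambda>\<omega>. p2 (W \<omega>)) = B" "(\<lambda>\<omega>. p3 (W \<omega>)) = C" "(\<lambda>\<omega>. p4 (W \<omega>)) = D"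
    "(\<lambda>\<omega>. p2 (W2 \<omega>)) = B" "(\<lambda>\<omega>. p4 (W2 \<omega>)) = D"
    unfolding p1_def p2_def p3_def p4_def W_def W2_def by auto
  define NN where "NN = real n"
  define SS where "SS = real (n + m)"
  define KK where "KK = real m"
  have NNpos: "NN > 0" unfolding NN_def using n by simp
  have SSpos: "SS > 0" unfolding SS_def using n by simp
  have KKeq: "KK = SS - NN" unfolding KK_def SS_def NN_def by simp
  define X where "X = (\<lambda>x0 x1 x2 x3 \<omega>. x0 + x1 * (\<Sum>i\<in>L. p1 (V i \<omega>)) + x2 * (\<Sum>i\<in>L. p2 (V i \<omega>)) + x3 * (\<Sum>i\<in>U. p2 (V i \<omega>)))"
  define Z where "Z = (\<lambda>x0 x1 x2 x3 \<omega>. x0 + x1 * (\<Sum>i\<in>L. p3 (V i \<omega>)) + x2 * (\<Sum>i\<in>L. p4 (V i \<omega>)) + x3 * (\<Sum>i\<in>U. p4 (V i \<omega>)))"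
  have EX: "Ex M (X x0 x1 x2 x3) = x0 + x1 * (NN * Ex M A) + x2 * (NN * Ex M B) + x3 * (KK * Ex M B)" for x0 x1 x2 x3
    unfolding X_def NN_def KK_def
    by (subst ex_lin3) (auto intro!: sqint_integrable sqL sqU PPm simp: exL exU PPm pW)
  have EZ: "Ex M (Z x0 x1 x2 x3) = x0 + x1 * (NN * Ex M C) + x2 * (NN * Ex M D) + x3 * (KK * Ex M D)" for x0 x1 x2 x3
    unfolding Z_def NN_def KK_def
    by (subst ex_lin3) (auto intro!: sqint_integrable sqL sqU PPm simp: exL exU PPm pW)
  have CXX: "Cov M (X x0 x1 x2 x3) (X y0 y1 y2 y3) = NN * (x1 * y1 * Cov M A A + x1 * y2 * Cov M A B + x2 * y1 * Cov M A B + x2 * y2 * Cov M B B) + KK * x3 * y3 * Cov M B B" for x0 x1 x2 x3 y0 y1 y2 y3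
    unfolding X_def NN_def KK_def
    by (subst cov_lin3) (auto intro!: sqL sqU PPm simp: covLL covUU covLU PPm pW Cov_sym[of B A] algebra_simps)
  have CZZ: "Cov M (Z x0 x1 x2 x3) (Z y0 y1 y2 y3) = NN * (x1 * y1 * Cov M C C + x1 * y2 * Cov M C D + x2 * y1 * Cov M C D + x2 * y2 * Cov M D D) + KK * x3 * y3 * Cov M D D" for x0 x1 x2 x3 y0 y1 y2 y3
    unfolding Z_def NN_def KK_def
    by (subst cov_lin3) (auto intro!: sqL sqU PPm simp: covLL covUU covLU PPm pW Cov_sym[of D C] algebra_simps)
  have CXZ: "Cov M (X x0 x1 x2 x3) (Z y0 y1 y2 y3) = NN * (x1 * y1 * Cov M A C + x1 * y2 * Cov M A D + x2 * y1 * Cov M B C + x2 * y2 * Cov M B D) + KK * x3 * y3 * Cov M B D" for x0 x1 x2 x3 y0 y1 y2 y3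
    unfolding X_def Z_def NN_def KK_def
    by (subst cov_lin3) (auto intro!: sqL sqU PPm simp: covLL covUU covLU PPm pW algebra_simps)
  have Nt_def: "Nt = (\<lambda>\<alpha> \<omega>. smean As n \<omega> + \<alpha> * (smean Bs (n + m) \<omega> - smean Bs n \<omega>))" using assms(23) by simp
  have N_def: "N = (\<lambda>\<alpha> \<omega>. smean As n \<omega> + \<alpha> * (Ex M B - smean Bs n \<omega>))" using assms(21) by simp
  have Mt_def: "Mt = (\<lambda>\<beta> \<omega>. smean Cs n \<omega> + \<beta> * (smean Ds (n + m) \<omega> - smean Ds n \<omega>))" using assms(24) by simp
  have Mb_def: "Mb = (\<lambda>\<beta> \<omega>. smean Cs n \<omega> + \<beta> * (Ex M D - smean Ds n \<omega>))" using assms(22) by simp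
  have sumL: "(\<Sum>i<n. F i \<omega>) = (\<Sum>i\<in>L. G (V i \<omega>))" if "\<And>i. i < n \<Longrightarrow> G (V i \<omega>) = F i \<omega>" for F G \<omega>
    unfolding L_def using that by (intro sum.cong) auto
  have sumLU: "(\<Sum>i<n + m. F i \<omega>) = (\<Sum>i\<in>L. G (V i \<omega>)) + (\<Sum>i\<in>U. G (V i \<omega>))" if "\<And>i. G (V i \<omega>) = F i \<omega>" for F G \<omega>
  proof -
    have "{..<n + m} = L \<union> U" unfolding L_def U_def by auto
    then have "(\<Sum>i<n + m. F i \<omega>) = (\<Sum>i\<in>L. F i \<omega>) + (\<Sum>i\<in>U. F i \<omega>)"
      using LU by (simp add: sum.union_disjoint L_def U_def)
    then show ?thesis using that by simp
  qed
  have sA1: "(\<Sum>i<n. As i \<omega>) = (\<Sum>i\<in>L. p1 (V i \<omega>))" for \<omega> by (rule sumL) (simp add: V_def p1_def)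
  have sB1: "(\<Sum>i<n. Bs i \<omega>) = (\<Sum>i\<in>L. p2 (V i \<omega>))" for \<omega> by (rule sumL) (simp add: V_def p2_def)
  have sC1: "(\<Sum>i<n. Cs i \<omega>) = (\<Sum>i\<in>L. p3 (V i \<omega>))" for \<omega> by (rule sumL) (simp add: V_def p3_def)
  have sD1: "(\<Sum>i<n. Ds i \<omega>) = (\<Sum>i\<in>L. p4 (V i \<omega>))" for \<omega> by (rule sumL) (simp add: V_def p4_def)
  have sB2: "(\<Sum>i<n + m. Bs i \<omega>) = (\<Sum>i\<in>L. p2 (V i \<omega>)) + (\<Sum>i\<in>U. p2 (V i \<omega>))" for \<omega>
    by (rule sumLU) (simp add: V_def p2_def)
  have sD2: "(\<Sum>i<n + m. Ds i \<omega>) = (\<Sum>i\<in>L. p4 (V i \<omega>)) + (\<Sum>i\<in>U. p4 (V i \<omega>))" for \<omega>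
    by (rule sumLU) (simp add: V_def p4_def)
  have hAs: "smean As n = X 0 (1/NN) 0 0"
    unfolding X_def smean_def NN_def by (simp add: fun_eq_iff sA1)
  have hCs: "smean Cs n = Z 0 (1/NN) 0 0"
    unfolding Z_def smean_def NN_def by (simp add: fun_eq_iff sC1)
  have hNt: "Nt \<alpha> = X 0 (1/NN) (\<alpha> * (1/SS - 1/NN)) (\<alpha>/SS)" for \<alpha>
    unfolding Nt_def X_def smean_def NN_def[symmetric] SS_def[symmetric] sA1 sB1 sB2
    using NNpos SSpos by (simp add: fun_eq_iff field_simps)
  have hMt: "Mt \<beta> = Z 0 (1/NN) (\<beta> * (1/SS - 1/NN)) (\<beta>/SS)" for \<beta>
    unfolding Mt_def Z_def smean_def NN_def[symmetric] SS_def[symmetric] sC1 sD1 sD2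
    using NNpos SSpos by (simp add: fun_eq_iff field_simps)
  have hN: "N \<alpha> = X (\<alpha> * Ex M B) (1/NN) (- \<alpha>/NN) 0" for \<alpha>
    unfolding N_def X_def smean_def NN_def[symmetric] sA1 sB1
    using NNpos SSpos by (simp add: fun_eq_iff field_simps)
  have hMb: "Mb \<beta> = Z (\<beta> * Ex M D) (1/NN) (- \<beta>/NN) 0" for \<beta>
    unfolding Mb_def Z_def smean_def NN_def[symmetric] sC1 sD1
    using NNpos SSpos by (simp add: fun_eq_iff field_simps)
  have VarCov: "Var M F = Cov M F F" for F unfolding Var_def Cov_def by (simp add: power2_eq_square)
  have eX: "Ex M (Nt \<alpha>) = Ex M A" "Ex M (N \<alpha>) = Ex M A" "Ex M (smean As n) = Ex M A" for \<alpha>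
    unfolding hNt hN hAs EX using NNpos SSpos unfolding KKeq by (simp_all add: field_simps)
  have eZ: "Ex M (Mt \<beta>) = Ex M C" "Ex M (Mb \<beta>) = Ex M C" "Ex M (smean Cs n) = Ex M C" for \<beta>
    unfolding hMt hMb hCs EZ using NNpos SSpos unfolding KKeq by (simp_all add: field_simps)
  have sX: "Var M (Nt \<alpha>) - Var M (smean As n) = KK/SS * (Var M (N \<alpha>) - Var M (smean As n))" for \<alpha>
    unfolding VarCov hNt hN hAs CXX unfolding KKeq using NNpos SSpos by (simp add: field_simps)
  have sZ: "Var M (Mt \<beta>) - Var M (smean Cs n) = KK/SS * (Var M (Mb \<beta>) - Var M (smean Cs n))" for \<beta>
    unfolding VarCov hMt hMb hCs CZZ unfolding KKeq using NNpos SSpos by (simp add: field_simps)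
  have sXZ: "Cov M (Nt \<alpha>) (Mt \<beta>) - Cov M (smean As n) (smean Cs n) = KK/SS * (Cov M (N \<alpha>) (Mb \<beta>) - Cov M (smean As n) (smean Cs n))" for \<alpha> \<beta>
    unfolding hNt hN hAs hMt hMb hCs CXZ unfolding KKeq using NNpos SSpos by (simp add: field_simps)
  have sXZ0: "Cov M (Nt \<alpha>) (smean Cs n) - Cov M (smean As n) (smean Cs n) = KK/SS * (Cov M (N \<alpha>) (smean Cs n) - Cov M (smean As n) (smean Cs n))" for \<alpha>
    unfolding hNt hN hAs hCs CXZ unfolding KKeq using NNpos SSpos by (simp add: field_simps)
  have sZ0: "Var M (smean Cs n) - Var M (smean Cs n) = KK/SS * (Var M (smean Cs n) - Var M (smean Cs n))" by simp
  have r: "real m / real (n + m) = KK/SS" unfolding KK_def SS_def ..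
  have rpos: "KK/SS > 0" unfolding KK_def SS_def using m by simp
  have key1: "Phi M (Nt \<alpha>) (Mt \<beta>) - Phi M (smean As n) (smean Cs n)
              = KK/SS * (Phi M (N \<alpha>) (Mb \<beta>) - Phi M (smean As n) (smean Cs n))" for \<alpha> \<beta>
    unfolding Phi_def eX eZ by (rule phi_alg[OF sX sZ sXZ])
  have key2: "Phi M (Nt \<alpha>) (smean Cs n) - Phi M (smean As n) (smean Cs n)
              = KK/SS * (Phi M (N \<alpha>) (smean Cs n) - Phi M (smean As n) (smean Cs n))" for \<alpha>
    unfolding Phi_def eX eZ by (rule phi_alg[OF sX sZ0 sXZ0])
  have min1: "(\<forall>\<alpha>' \<beta>'. Phi M (Nt \<alpha>) (Mt \<beta>) \<le> Phi M (Nt \<alpha>') (Mt \<beta>'))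
            \<longleftrightarrow> (\<forall>\<alpha>' \<beta>'. Phi M (N \<alpha>) (Mb \<beta>) \<le> Phi M (N \<alpha>') (Mb \<beta>'))" for \<alpha> \<beta>
    using le_iff_scaled[OF rpos key1 key1] by blast
  have min2: "(\<forall>\<alpha>'. Phi M (Nt \<alpha>) (smean Cs n) \<le> Phi M (Nt \<alpha>') (smean Cs n))
            \<longleftrightarrow> (\<forall>\<alpha>'. Phi M (N \<alpha>) (smean Cs n) \<le> Phi M (N \<alpha>') (smean Cs n))" for \<alpha>
    using le_iff_scaled[OF rpos key2 key2] by blast
  show ?thesis unfolding r using key1 key2 min1 min2 by blast
qed

end
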